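(* Let $K\subset\mathbb{R}^3$ be finite, and let $(A^j)$ be the sequence of sets produced by the finitely extremal points elimination algorithm applied to $K$. Then for every $j$, every extremal point of $M^j=(A^j)^{hv}$ is a finitely extremal point of $A^j$.
   Context: Grid: let $F\subset\mathbb{R}^2$ be the projection of $K$ to the $(x,y)$-plane and $H$ the set of $z$-coordinates of points of $K$. The first derived set $F^1$ is the set of points of $\mathbb{R}^2\setminus F$ that are the single intersection point of two segments with endpoints in $F$. The grid is $G=(F\cup F^1)\times H$. hv-hull: for finite $A\subset\mathbb{R}^3$ with set of heights $h_1<\dots<h_m$ and $\pi$ the projection to the $(x,y)$-plane, $A^{h}=\bigcup_i co(A\cap\{z=h_i\})$ and $A^{hv}=A^h\cup\bigcup_{j}\big(\pi(co(A\cap\{z=h_j\}))\cap\pi(co(A\cap\{z=h_{j+1}\}))\big)\times[h_j,h_{j+1}]$. Finitely extremal: for finite $A$, a point $p\in A$ is $A$-finitely extremal if neither (i) there are $p_1,p_2\in A$ on the same vertical line (parallel to the $z$ axis) with $p$ in the relative interior of $[p_1,p_2]$, nor (ii) $p$ lies in the convex hull of $\{q\in A\setminus\{p\}: z(q)=z(p)\}$. Algorithm: set $A^0=G$; while the set of finitely extremal points of $A^k$ is not contained in $K$, choose a finitely extremal point $p_k$ of $A^k$ with $p_k\notin K$ and set $A^{k+1}=A^k\setminus\{p_k\}$. For $M\subset\mathbb{R}^3$, $p\in M$ is extremal if no relatively open horizontal (contained in a plane $\{z=c\}$) or vertical segment contained in $M$ contains $p$. *)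

theory Defs
  imports "HOL-Analysis.Analysis"
begin

text \<open>Points of R^3 are represented as ((x,y),z) :: (real \<times> real) \<times> real.
  The projection to the (x,y)-plane is fst, the height (z-coordinate) is snd.\<close>

type_synonym pt3 = "(real \<times> real) \<times> real"

definition grid_F :: "pt3 set \<Rightarrow> (real \<times> real) set" where
  "grid_F K = fst ` K"

definition grid_H :: "pt3 set \<Rightarrow> real set" where
  "grid_H K = snd ` K"

definition derived1 :: "(real \<times> real) set \<Rightarrow> (real \<times> real) set" where
  "derived1 F = {q. q \<notin> F \<and> (\<exists>a\<in>F. \<exists>b\<in>F. \<exists>c\<in>F. \<exists>d\<in>F.
       closed_segment a b \<inter> closed_segment c d = {q})}"

definition grid :: "pt3 set \<Rightarrow> pt3 set" where
  "grid K = (grid_F K \<union> derived1 (grid_F K)) \<times> grid_H K"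

definition slice :: "pt3 set \<Rightarrow> real \<Rightarrow> pt3 set" where
  "slice A h = {q \<in> A. snd q = h}"

definition h_hull :: "pt3 set \<Rightarrow> pt3 set" where
  "h_hull A = (\<Union>h\<in>snd ` A. convex hull (slice A h))"

definition hv_hull :: "pt3 set \<Rightarrow> pt3 set" where
  "hv_hull A = h_hull A \<union>
     (\<Union>{(fst ` (convex hull (slice A h1)) \<inter> fst ` (convex hull (slice A h2))) \<times> {h1..h2}
        | h1 h2. h1 \<in> snd ` A \<and> h2 \<in> snd ` A \<and> h1 < h2 \<and>
                 \<not> (\<exists>h\<in>snd ` A. h1 < h \<and> h < h2)})"

definition fin_extremal :: "pt3 set \<Rightarrow> pt3 \<Rightarrow> bool" where
  "fin_extremal A p \<longleftrightarrow> p \<in> A \<and>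
     \<not> (\<exists>p1\<in>A. \<exists>p2\<in>A. fst p1 = fst p2 \<and> p \<in> open_segment p1 p2) \<and>
     p \<notin> convex hull {q \<in> A - {p}. snd q = snd p}"

definition hv_extremal :: "pt3 set \<Rightarrow> pt3 \<Rightarrow> bool" where
  "hv_extremal M p \<longleftrightarrow> p \<in> M \<and>
     \<not> (\<exists>a b. a \<noteq> b \<and> (snd a = snd b \<or> fst a = fst b) \<and>
              open_segment a b \<subseteq> M \<and> p \<in> open_segment a b)"

definition elim_run :: "pt3 set \<Rightarrow> (nat \<Rightarrow> pt3 set) \<Rightarrow> nat \<Rightarrow> bool" where
  "elim_run K A n \<longleftrightarrow> A 0 = grid K \<and>
     (\<forall>k<n. \<exists>p. fin_extremal (A k) p \<and> p \<notin> K \<and> A (Suc k) = A k - {p}) \<and>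
     {p. fin_extremal (A n) p} \<subseteq> K"

end

theory Submission
  imports Defs
begin

lemma convex_level: "convex {q::pt3. snd q = h}"
  unfolding convex_def by (auto simp: algebra_simps distrib_right[symmetric])

lemma hull_slice_level: "convex hull (slice A h) \<subseteq> {q. snd q = h}"
  by (rule hull_minimal) (auto simp: slice_def convex_level)

lemma hull_slice_M: "convex hull (slice A h) \<subseteq> hv_hull A"
proof (cases "slice A h = {}")
  case True then show ?thesis by simp
next
  case False
  then have "h \<in> snd ` A" by (force simp: slice_def)
  then show ?thesis unfolding hv_hull_def h_hull_def by blast
qed

lemma key1:
  assumes "S \<subseteq> {q. snd q = h}" "convex hull S \<subseteq> M" "p \<in> convex hull S"
    "hv_extremal M p"
  shows "p \<in> S"
proof -
  have lev: "convex hull S \<subseteq> {q. snd q = h}"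
    using assms(1) by (intro hull_minimal) (auto simp: convex_level)
  have "p extreme_point_of (convex hull S)"
    unfolding extreme_point_of_def
  proof (intro conjI ballI notI)
    show "p \<in> convex hull S" by fact
  next
    fix a b assume ab: "a \<in> convex hull S" "b \<in> convex hull S" "p \<in> open_segment a b"
    then have "a \<noteq> b" by auto
    moreover have "snd a = snd b" using ab lev by auto
    moreover have "open_segment a b \<subseteq> M"
      using ab assms(2) convex_contains_segment[of "convex hull S"] open_closed_segment
      by (meson convex_convex_hull subsetD subsetI)
    ultimately show False using assms(4) ab(3) unfolding hv_extremal_def by blast
  qed
  then show ?thesis by (rule extreme_point_of_convex_hull)
qed

lemma vert_open: "(y, t) \<in> open_segment (x, a) (x, (b::real)) \<Longrightarrow> a < b \<Longrightarrow> y = x \<and> a < t \<and> t < b"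
proof -
  assume a: "(y, t) \<in> open_segment (x, a) (x, (b::real))" "a < b"
  then have "(y, t) \<in> closed_segment (x, a) (x, b)" using open_closed_segment by blast
  then have "y = x" using closed_segment_PairD by fastforce
  moreover have "t \<in> open_segment a b \<or> a = b" using open_segment_PairD[OF a(1)] by blast
  ultimately show ?thesis using a(2) by (auto simp: open_segment_eq_real_ivl)
qed

lemma vert_open2: "a < t \<Longrightarrow> t < (b::real) \<Longrightarrow> (x, t) \<in> open_segment (x, a) (x, b)"
proof -
  assume h: "a < t" "t < b"
  define u where "u = (t - a) / (b - a)"
  have u: "0 < u" "u < 1" using h by (auto simp: u_def field_simps)
  have "u * (b - a) = t - a" using h by (simp add: u_def)
  then have "t = (1 - u) * a + u * b" by (simp add: algebra_simps)
  then show ?thesis using u h unfolding in_segment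
    by (intro conjI exI[of _ u]) (auto simp: algebra_simps)
qed

lemma inv:
  assumes "elim_run K A n" "k \<le> n"
  shows "A k \<subseteq> grid K \<and> (\<forall>x h1 h2 h. (x,h1) \<in> A k \<and> (x,h2) \<in> A k \<and> h1 < h \<and> h < h2
          \<and> h \<in> grid_H K \<longrightarrow> (x,h) \<in> A k)"
  using assms(2)
proof (induction k)
  case 0
  have "A 0 = grid K" using assms(1) unfolding elim_run_def by blast
  then show ?case unfolding grid_def by (simp add: mem_Times_iff)
next
  case (Suc k)
  have kn: "k \<le> n" "k < n" using Suc.prems by simp_all
  note IH0 = Suc.IH[OF kn(1)]
  have IH: "A k \<subseteq> grid K" "\<And>x h1 h2 h. (x,h1) \<in> A k \<Longrightarrow> (x,h2) \<in> A k \<Longrightarrow> h1 < h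
     \<Longrightarrow> h < h2 \<Longrightarrow> h \<in> grid_H K \<Longrightarrow> (x,h) \<in> A k"
    using conjunct1[OF IH0] apply blast
    using conjunct2[OF IH0] by blast
  have "\<forall>k<n. \<exists>p. fin_extremal (A k) p \<and> p \<notin> K \<and> A (Suc k) = A k - {p}"
    using assms(1) unfolding elim_run_def by blast
  then obtain p where p: "fin_extremal (A k) p" "A (Suc k) = A k - {p}"
    using kn(2) by blast
  show ?case
  proof (intro conjI allI impI)
    show "A (Suc k) \<subseteq> grid K" using p IH by auto
  next
    fix x h1 h2 h assume a: "(x,h1) \<in> A (Suc k) \<and> (x,h2) \<in> A (Suc k) \<and> h1 < h \<and> h < h2 \<and> h \<in> grid_H K"
    have a1: "(x,h1) \<in> A k" "(x,h2) \<in> A k" using a p(2) by simp_all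
    have "(x,h) \<in> A k" using IH(2)[OF a1] a by blast
    moreover have "(x,h) \<noteq> p"
    proof
      assume e: "(x,h) = p"
      have "(x,h) \<in> open_segment (x,h1) (x,h2)" using a vert_open2 by blast
      then have "\<exists>p1\<in>A k. \<exists>p2\<in>A k. fst p1 = fst p2 \<and> p \<in> open_segment p1 p2"
        using a1 e by (intro bexI[of _ "(x,h1)"] bexI[of _ "(x,h2)"]) simp_all
      then show False using p(1) unfolding fin_extremal_def by blast
    qed
    ultimately show "(x,h) \<in> A (Suc k)" using p(2) by blast
  qed
qed

lemma prism_in:
  assumes "h1 \<in> snd ` B" "h2 \<in> snd ` B" "h1 < h2" "\<not> (\<exists>h\<in>snd ` B. h1 < h \<and> h < h2)"
    "x \<in> fst ` (convex hull (slice B h1))" "x \<in> fst ` (convex hull (slice B h2))" "h1 \<le> t" "t \<le> h2"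
  shows "(x,t) \<in> hv_hull B"
proof -
  have "(x,t) \<in> (fst ` (convex hull (slice B h1)) \<inter> fst ` (convex hull (slice B h2))) \<times> {h1..h2}"
    using assms by auto
  then show ?thesis unfolding hv_hull_def using assms(1-4) by blast
qed

lemma in_slice_hull: "(x,h) \<in> B \<Longrightarrow> x \<in> fst ` (convex hull (slice B h))"
  by (rule image_eqI[of _ _ "(x,h)"]) (auto intro: hull_inc simp: slice_def)

theorem lemma5p12:
  fixes K :: "pt3 set" and A :: "nat \<Rightarrow> pt3 set" and n :: nat
  assumes "finite K"
    and "elim_run K A n"
    and "j \<le> n"
    and "hv_extremal (hv_hull (A j)) p"
  shows "fin_extremal (A j) p"
proof -
  define B where "B = A j"
  define M where "M = hv_hull B"
  have I: "B \<subseteq> grid K" "\<And>x h1 h2 h. (x,h1) \<in> B \<Longrightarrow> (x,h2) \<in> B \<Longrightarrow> h1 < h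
     \<Longrightarrow> h < h2 \<Longrightarrow> h \<in> grid_H K \<Longrightarrow> (x,h) \<in> B"
    using inv[OF assms(2,3)] unfolding B_def by blast+
  have HB: "snd ` B \<subseteq> grid_H K" using I(1) unfolding grid_def by auto
  have finH: "finite (snd ` B)"
    using assms(1) HB unfolding grid_H_def by (meson finite_imageI finite_subset)
  have ext: "hv_extremal M p" using assms(4) unfolding M_def B_def by simp
  have sliceM: "\<And>h. convex hull (slice B h) \<subseteq> M" unfolding M_def by (rule hull_slice_M)
  have viaSlice: "\<And>h. p \<in> convex hull (slice B h) \<Longrightarrow> p \<in> B"
  proof -
    fix h assume "p \<in> convex hull (slice B h)"
    then have "p \<in> slice B h"
      by (intro key1[OF _ sliceM _ ext, of _ h]) (auto simp: slice_def)
    then show "p \<in> B" by (simp add: slice_def)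
  qed
  obtain x t where pxt: "p = (x,t)" by (metis prod.collapse)
  have pB: "p \<in> B"
  proof -
    have "p \<in> M" using ext unfolding hv_extremal_def by blast
    then consider (H) "p \<in> h_hull B"
      | (V) h1 h2 where "h1 \<in> snd ` B" "h2 \<in> snd ` B" "h1 < h2" "\<not> (\<exists>h\<in>snd ` B. h1 < h \<and> h < h2)"
        "p \<in> (fst ` (convex hull (slice B h1)) \<inter> fst ` (convex hull (slice B h2))) \<times> {h1..h2}"
      unfolding M_def hv_hull_def by blast
    then show ?thesis
    proof cases
      case H then show ?thesis using viaSlice unfolding h_hull_def by blast
    next
      case V
      have sub: "open_segment (x,h1) (x,h2) \<subseteq> M"
      proof
        fix q assume q: "q \<in> open_segment (x,h1) (x,h2)"
        obtain y s where "q = (y,s)" by (metis prod.collapse)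
        with q vert_open[of y s x h1 h2] V(3) have "q = (x,s)" "h1 < s" "s < h2" by auto
        then show "q \<in> M" using V pxt prism_in[of h1 B h2 x s] unfolding M_def by auto
      qed
      have "\<not> (h1 < t \<and> t < h2)"
      proof
        assume "h1 < t \<and> t < h2"
        then have "p \<in> open_segment (x,h1) (x,h2)" using pxt vert_open2 by blast
        moreover have "(x,h1) \<noteq> (x,h2)" using V(3) by simp
        ultimately show False using ext sub unfolding hv_extremal_def
          by (metis fst_conv)
      qed
      then have "t = h1 \<or> t = h2" using V pxt by auto
      then obtain h where "x \<in> fst ` (convex hull (slice B h))" "t = h" using V pxt by auto
      then obtain q where q: "q \<in> convex hull (slice B h)" "fst q = x" by auto
      then have "snd q = t" using hull_slice_level \<open>t = h\<close> by blast
      then have "q = p" using q pxt by (metis prod.collapse)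
      then show ?thesis using q viaSlice by blast
    qed
  qed
  have vert_lemma: "False" if "(x,h1) \<in> B" "(x,h2) \<in> B" "h1 < t" "t < h2" for h1 h2
  proof -
    define Lo where "Lo = {h\<in>snd ` B. h < t}"
    define Hi where "Hi = {h\<in>snd ` B. t < h}"
    have "h1 \<in> Lo" "h2 \<in> Hi" using that unfolding Lo_def Hi_def by force+
    have fL: "finite Lo" "finite Hi" using finH unfolding Lo_def Hi_def by auto
    define lo where "lo = Max Lo"
    define hi where "hi = Min Hi"
    have lo: "lo \<in> Lo" "h1 \<le> lo" using fL \<open>h1 \<in> Lo\<close> unfolding lo_def by (auto intro: Max_in)
    have hi: "hi \<in> Hi" "hi \<le> h2" using fL \<open>h2 \<in> Hi\<close> unfolding hi_def by (auto intro: Min_in)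
    have lo_max: "\<And>h. h \<in> snd ` B \<Longrightarrow> h < t \<Longrightarrow> h \<le> lo" using fL unfolding lo_def Lo_def by auto
    have hi_min: "\<And>h. h \<in> snd ` B \<Longrightarrow> t < h \<Longrightarrow> hi \<le> h" using fL unfolding hi_def Hi_def by auto
    have tB: "t \<in> snd ` B" using pB pxt by force
    have xlo: "(x,lo) \<in> B"
    proof (cases "lo = h1")
      case True then show ?thesis using that by simp
    next
      case False
      then show ?thesis using I(2)[OF that(1,2)] lo HB that unfolding Lo_def by auto
    qed
    have xhi: "(x,hi) \<in> B"
    proof (cases "hi = h2")
      case True then show ?thesis using that by simp
    next
      case False
      then show ?thesis using I(2)[OF that(1,2)] hi HB that unfolding Hi_def by auto
    qed
    have loB: "lo \<in> snd ` B" "lo < t" using lo unfolding Lo_def by auto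
    have hiB: "hi \<in> snd ` B" "t < hi" using hi unfolding Hi_def by auto
    have sub: "open_segment (x,lo) (x,hi) \<subseteq> M"
    proof
      fix q assume q: "q \<in> open_segment (x,lo) (x,hi)"
      obtain y s where "q = (y,s)" by (metis prod.collapse)
      with q vert_open[of y s x lo hi] loB hiB have qs: "q = (x,s)" "lo < s" "s < hi" by auto
      show "q \<in> M"
      proof (cases "s \<le> t")
        case True
        have "(x,s) \<in> hv_hull B"
          apply (rule prism_in[of lo B t])
          using loB tB True qs lo_max in_slice_hull[OF xlo] in_slice_hull[of x t B] pB pxt
          by force+
        then show ?thesis unfolding M_def qs .
      next
        case False
        have "(x,s) \<in> hv_hull B"
          apply (rule prism_in[of t B hi])
          using hiB tB False qs hi_min in_slice_hull[OF xhi] in_slice_hull[of x t B] pB pxt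
          by force+
        then show ?thesis unfolding M_def qs .
      qed
    qed
    have "p \<in> open_segment (x,lo) (x,hi)" using pxt vert_open2 loB hiB by blast
    moreover have "(x,lo) \<noteq> (x,hi)" using loB hiB by simp
    ultimately show False using ext sub unfolding hv_extremal_def
      by (metis fst_conv)
  qed
  have step2: "\<not> (\<exists>p1\<in>B. \<exists>p2\<in>B. fst p1 = fst p2 \<and> p \<in> open_segment p1 p2)"
  proof
    assume "\<exists>p1\<in>B. \<exists>p2\<in>B. fst p1 = fst p2 \<and> p \<in> open_segment p1 p2"
    then obtain y h1 h2 where yh: "(y,h1) \<in> B" "(y,h2) \<in> B" "(x,t) \<in> open_segment (y,h1) (y,h2)"
      using pxt by (metis prod.collapse)
    have "(x,t) \<in> closed_segment (y,h1) (y,h2)" using yh(3) open_closed_segment by blast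
    then have "x = y" using closed_segment_PairD by fastforce
    have "t \<in> open_segment h1 h2 \<or> h1 = h2" using open_segment_PairD[OF yh(3)] by blast
    moreover have "h1 \<noteq> h2" using yh(3) by (metis empty_iff open_segment_idem)
    ultimately have "t \<in> open_segment h1 h2" by blast
    then have tt: "min h1 h2 < t" "t < max h1 h2" by (cases "h1 \<le> h2"; simp add: open_segment_eq_real_ivl)+
    show False
    proof (cases "h1 < h2")
      case True
      then show ?thesis using vert_lemma[of h1 h2] yh(1,2) tt \<open>x = y\<close> by simp
    next
      case False
      then show ?thesis using vert_lemma[of h2 h1] yh(1,2) tt \<open>x = y\<close> by simp
    qed
  qed
  have step3: "p \<notin> convex hull {q \<in> B - {p}. snd q = snd p}"
  proof
    assume a: "p \<in> convex hull {q \<in> B - {p}. snd q = snd p}"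
    have "convex hull {q \<in> B - {p}. snd q = snd p} \<subseteq> convex hull (slice B (snd p))"
      by (rule hull_mono) (auto simp: slice_def)
    then have "p \<in> {q \<in> B - {p}. snd q = snd p}"
      using sliceM a by (intro key1[OF _ _ a ext, of "snd p"]) auto
    then show False by simp
  qed
  show ?thesis unfolding fin_extremal_def using pB step2 step3 B_def by blast
qed

end
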